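(* Let $d\ge1$ and $r\ge4$ be integers, $\delta_0\in(0,1)$, and $p(x)\in\mathbb{Z}[i][x]$ a polynomial of degree $d$. Let $N, N_1$ be positive integers with $N\ge N_1$. Let $A\subseteq[N]$ have density $\delta\ge\delta_0$ and let $D$ be a nonempty subset of $[2N^{1/(2d)}]$. Assume the balanced function $f$ of $A$ satisfies \[ \Big| \mathbb{E}_{n\in[N]}\mathbb{E}_{x\in D}\mathbb{E}_{\mathbf{h}\in [N^{1/(8d^r)}]^{d-1}} f(n) f\big(n + p(\sigma_{d-1}(x,\mathbf{h}))\big)\Big| \ge \frac{\delta^2}{2}. \] Define \[ N_0 = \max\left\{N_1,\ \left(\frac{2^{3\cdot 2^{d-1}-1}}{\delta_0^{2^{d-1}+1}}\right)^{4d^r},\ \left(\frac{2^{3\cdot 2^{d-1}}(2d+2)^{2d+2}2^{2d(d+1)}M_p^2}{\delta_0^{2^{d-1}+1}}\right)^4\right\}. \] If $N\ge N_0$, then there exist Gaussian integers $\alpha,\beta$ with $\alpha\neq0$ and $\max\{|\alpha|,|\beta|\}\le 2^{d(2d+1)}M_p N^{1/(8d^{r-2})}$ such that \[ \Big|\mathbb{E}_{n\in[N]}\mathbb{E}_{x\in D} f(n) f(n+\alpha x+\beta)\Big| \ge \frac{\delta^{2^{d-1}+1}}{2^{3\cdot 2^{d-1}-2}}. \]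
   Context: For a real number $X\ge 1$, $[X] := \{a+bi \in \mathbb{Z}[i] : a,b \in \mathbb{Z},\ 1 \le a,b \le X\}$; $[X]^j$ is its $j$-fold Cartesian product (for $j=0$ a single empty tuple). For a finite nonempty set $S$, $\mathbb{E}_{x\in S} g(x) := |S|^{-1}\sum_{x\in S} g(x)$. A subset $A\subseteq[N]$ has density $\delta=|A|/N^2$, and its balanced function is $f(n) = \mathbf{1}_A(n) - \delta\mathbf{1}_{[N]}(n)$ for $n\in\mathbb{Z}[i]$. For $x \in \mathbb{Z}[i]$ and $\mathbf{h} = (h_1,\dots,h_j)$, $\sigma_j(x,\mathbf{h}) := x + h_1 + \dots + h_j$. For $p(x) = a_d x^d + \dots + a_0 \in \mathbb{C}[x]$ with $a_d\neq 0$, $M_p := 2\max\{|a_0|,\dots,|a_d|\}$. *)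

theory Defs
  imports "HOL-Analysis.Analysis" "HOL-Computational_Algebra.Polynomial"
begin

definition gauss_ints :: "complex set" where
  "gauss_ints = {z. Re z \<in> \<int> \<and> Im z \<in> \<int>}"

definition gbox :: "real \<Rightarrow> complex set" where
  "gbox X = {Complex (of_int a) (of_int b) | a b :: int.
               1 \<le> a \<and> real_of_int a \<le> X \<and> 1 \<le> b \<and> real_of_int b \<le> X}"

definition gbox_pow :: "real \<Rightarrow> nat \<Rightarrow> (nat \<Rightarrow> complex) set" where
  "gbox_pow X j = ({..<j} \<rightarrow>\<^sub>E gbox X)"

definition sigma :: "nat \<Rightarrow> complex \<Rightarrow> (nat \<Rightarrow> complex) \<Rightarrow> complex" where
  "sigma j x h = x + (\<Sum>i<j. h i)"

definition avg :: "'a set \<Rightarrow> ('a \<Rightarrow> real) \<Rightarrow> real" where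
  "avg S g = (\<Sum>x\<in>S. g x) / real (card S)"

definition density :: "complex set \<Rightarrow> nat \<Rightarrow> real" where
  "density A N = real (card A) / (real N)^2"

definition balanced :: "complex set \<Rightarrow> nat \<Rightarrow> complex \<Rightarrow> real" where
  "balanced A N n = indicator A n - density A N * indicator (gbox (real N)) n"

definition Mp :: "complex poly \<Rightarrow> real" where
  "Mp p = 2 * Max ((\<lambda>i. cmod (coeff p i)) ` {..degree p})"

end

theory Submission
  imports Defs
begin
lemma avg_cmult: "avg S (\<lambda>x. c * g x) = c * avg S g"
  by (simp add: avg_def sum_distrib_left)

lemma avg_swap: "avg A (\<lambda>a. avg B (\<lambda>b. g a b)) = avg B (\<lambda>b. avg A (\<lambda>a. g a b))"
  unfolding avg_def by (simp add: sum_divide_distrib[symmetric] sum.swap[of _ A B] )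

lemma avg_mono: "(\<And>x. x \<in> S \<Longrightarrow> g x \<le> h x) \<Longrightarrow> avg S g \<le> avg S h"
  unfolding avg_def by (intro divide_right_mono sum_mono) auto

lemma avg_const: "finite S \<Longrightarrow> S \<noteq> {} \<Longrightarrow> avg S (\<lambda>_. c) = c"
  unfolding avg_def by simp

lemma avg_abs: "\<bar>avg S g\<bar> \<le> avg S (\<lambda>x. \<bar>g x\<bar>)"
  unfolding avg_def by (simp add: abs_div_pos[symmetric] divide_right_mono sum_abs)

lemma avg_CS: "(avg S (\<lambda>x. g x * h x))\<^sup>2 \<le> avg S (\<lambda>x. (g x)\<^sup>2) * avg S (\<lambda>x. (h x)\<^sup>2)"
proof -
  have "(avg S (\<lambda>x. g x * h x))\<^sup>2 = (\<Sum>x\<in>S. g x * h x)\<^sup>2 / (real (card S))\<^sup>2"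
    unfolding avg_def by (simp add: power_divide)
  also have "\<dots> \<le> ((\<Sum>x\<in>S. (g x)\<^sup>2) * (\<Sum>x\<in>S. (h x)\<^sup>2)) / (real (card S))\<^sup>2"
    by (intro divide_right_mono Cauchy_Schwarz_ineq_sum) auto
  also have "\<dots> = avg S (\<lambda>x. (g x)\<^sup>2) * avg S (\<lambda>x. (h x)\<^sup>2)"
    unfolding avg_def by (simp add: power2_eq_square)
  finally show ?thesis .
qed

lemma avg_sq: "(avg S g)\<^sup>2 \<le> avg S (\<lambda>x. (g x)\<^sup>2)"
proof (cases "finite S \<and> S \<noteq> {}")
  case True
  have "(avg S g)\<^sup>2 = (avg S (\<lambda>x. 1 * g x))\<^sup>2" by simp
  also have "\<dots> \<le> avg S (\<lambda>x. 1\<^sup>2) * avg S (\<lambda>x. (g x)\<^sup>2)" by (rule avg_CS)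
  also have "\<dots> = avg S (\<lambda>x. (g x)\<^sup>2)" using True by (simp add: avg_const)
  finally show ?thesis .
next
  case False
  then show ?thesis unfolding avg_def by auto
qed

lemma gbox_eq: "gbox X = (\<lambda>(a,b). Complex (of_int a) (of_int b)) ` ({1..\<lfloor>X\<rfloor>} \<times> {1..\<lfloor>X\<rfloor>})"
  unfolding gbox_def by (auto simp: le_floor_iff image_iff)

lemma finite_gbox[simp]: "finite (gbox X)"
  unfolding gbox_eq by simp

lemma card_gbox: "card (gbox X) = (nat \<lfloor>X\<rfloor>)^2"
proof -
  have "inj_on (\<lambda>(a,b). Complex (of_int a) (of_int b)) ({1..\<lfloor>X\<rfloor>} \<times> {1..\<lfloor>X\<rfloor>})"
    by (auto simp: inj_on_def)
  then show ?thesis unfolding gbox_eq by (simp add: card_image card_cartesian_product power2_eq_square)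
qed

lemma gbox_nonempty: "X \<ge> 1 \<Longrightarrow> gbox X \<noteq> {}"
  unfolding gbox_eq by (auto simp: le_floor_iff)

lemma gbox_gauss: "z \<in> gbox X \<Longrightarrow> z \<in> gauss_ints"
  unfolding gbox_def gauss_ints_def by auto

lemma gbox_norm: "z \<in> gbox X \<Longrightarrow> cmod z \<le> 2 * X"
proof -
  assume "z \<in> gbox X"
  then obtain a b where z: "z = Complex (of_int a) (of_int b)" "1 \<le> a" "real_of_int a \<le> X" "1 \<le> b" "real_of_int b \<le> X"
    unfolding gbox_def by auto
  have "cmod z \<le> \<bar>Re z\<bar> + \<bar>Im z\<bar>" by (rule cmod_le)
  also have "\<dots> \<le> 2 * X" using z by simp
  finally show ?thesis .
qed

lemma finite_gbox_pow[simp]: "finite (gbox_pow X k)"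
  unfolding gbox_pow_def by (simp add: finite_PiE)

lemma gbox_pow_0: "gbox_pow X 0 = {\<lambda>_. undefined}"
  unfolding gbox_pow_def by simp

lemma card_gbox_pow_Suc: "card (gbox_pow X (Suc k)) = card (gbox X) * card (gbox_pow X k)"
  unfolding gbox_pow_def by (simp add: card_PiE)

lemma avg_gbox_pow_Suc:
  "avg (gbox_pow X (Suc k)) g = avg (gbox_pow X k) (\<lambda>h. avg (gbox X) (\<lambda>t. g (h(k:=t))))"
proof -
  have eq: "gbox_pow X (Suc k) = (\<lambda>(y, g). g(k := y)) ` (gbox X \<times> gbox_pow X k)"
    unfolding gbox_pow_def lessThan_Suc by (rule PiE_insert_eq)
  have inj: "inj_on (\<lambda>(y, g). g(k := y)) (gbox X \<times> gbox_pow X k)"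
    unfolding gbox_pow_def using inj_combinator[of k "{..<k}" "\<lambda>_. gbox X"] by simp
  have "(\<Sum>h\<in>gbox_pow X (Suc k). g h) = (\<Sum>(y,h)\<in>gbox X \<times> gbox_pow X k. g (h(k:=y)))"
    unfolding eq by (subst sum.reindex[OF inj]) (simp add: case_prod_unfold)
  also have "\<dots> = (\<Sum>h\<in>gbox_pow X k. \<Sum>y\<in>gbox X. g (h(k:=y)))"
    by (subst sum.cartesian_product[symmetric]) (rule sum.swap)
  finally have s: "(\<Sum>h\<in>gbox_pow X (Suc k). g h) = (\<Sum>h\<in>gbox_pow X k. \<Sum>y\<in>gbox X. g (h(k:=y)))" .
  show ?thesis
    unfolding avg_def s card_gbox_pow_Suc
    by (simp add: sum_divide_distrib[symmetric] field_simps)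
qed

lemma sigma_Suc_upd: "sigma (Suc k) x (h(k:=t)) = sigma k x h + t"
  unfolding sigma_def by simp

lemma avg_sq_eq: "(avg H \<phi>)\<^sup>2 = avg H (\<lambda>t. avg H (\<lambda>u. \<phi> t * \<phi> u))"
  unfolding avg_def power2_eq_square
  by (simp add: sum_product sum_divide_distrib[symmetric] sum_distrib_left field_simps)

lemma sum_avg_swap: "(\<Sum>n\<in>W. avg H (\<lambda>t. g n t)) = avg H (\<lambda>t. \<Sum>n\<in>W. g n t)"
  unfolding avg_def by (simp add: sum_divide_distrib[symmetric] sum.swap[of _ W H])

lemma shift_sum:
  fixes F :: "complex \<Rightarrow> real"
  assumes W: "finite W" and sub: "(\<lambda>m. m - s) ` G \<subseteq> W" and supp: "\<And>z. z \<notin> G \<Longrightarrow> F z = 0"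
  shows "(\<Sum>n\<in>W. F (n + s) * g n) = (\<Sum>m\<in>G. F m * g (m - s))"
proof -
  have "(\<Sum>n\<in>W. F (n + s) * g n) = (\<Sum>n\<in>(\<lambda>m. m - s) ` G. F (n + s) * g n)"
  proof (rule sum.mono_neutral_right[OF W sub], safe)
    fix n assume "n \<in> W" "n \<notin> (\<lambda>m. m - s) ` G"
    then have "n + s \<notin> G" by (metis add_diff_cancel image_eqI)
    then show "F (n + s) * g n = 0" using supp by simp
  qed
  also have "\<dots> = (\<Sum>m\<in>G. F m * g (m - s))"
    by (subst sum.reindex) (auto simp: inj_on_def)
  finally show ?thesis .
qed

lemma key_shift:
  fixes F :: "complex \<Rightarrow> real"
  assumes G: "finite G" and H: "finite H" and supp: "\<And>z. z \<notin> G \<Longrightarrow> F z = 0"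
  shows "avg G (\<lambda>n. (avg H (\<lambda>t. F (n + b t)))\<^sup>2)
     \<le> avg H (\<lambda>t. avg H (\<lambda>u. avg G (\<lambda>m. F m * F (m + b u - b t))))"
proof -
  define W where "W = G \<union> (\<Union>t\<in>H. (\<lambda>m. m - b t) ` G)"
  have W: "finite W" unfolding W_def using G H by auto
  have "(\<Sum>n\<in>G. (avg H (\<lambda>t. F (n + b t)))\<^sup>2) \<le> (\<Sum>n\<in>W. (avg H (\<lambda>t. F (n + b t)))\<^sup>2)"
    by (rule sum_mono2[OF W]) (auto simp: W_def)
  also have "\<dots> = (\<Sum>n\<in>W. avg H (\<lambda>t. avg H (\<lambda>u. F (n + b t) * F (n + b u))))"
    by (simp add: avg_sq_eq)
  also have "\<dots> = avg H (\<lambda>t. avg H (\<lambda>u. \<Sum>n\<in>W. F (n + b t) * F (n + b u)))"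
    by (simp add: sum_avg_swap)
  also have "\<dots> = avg H (\<lambda>t. avg H (\<lambda>u. \<Sum>m\<in>G. F m * F (m - b t + b u)))"
  proof -
    have "(\<Sum>n\<in>W. F (n + b t) * F (n + b u)) = (\<Sum>m\<in>G. F m * F (m - b t + b u))"
      if "t \<in> H" for t u
    proof -
      have sub: "(\<lambda>m. m - b t) ` G \<subseteq> W" using that by (auto simp: W_def)
      show ?thesis using shift_sum[where F=F and g="\<lambda>n. F (n + b u)", OF W sub supp] by (simp add: algebra_simps)
    qed
    then show ?thesis unfolding avg_def by (simp cong: sum.cong)
  qed
  finally have *: "(\<Sum>n\<in>G. (avg H (\<lambda>t. F (n + b t)))\<^sup>2) \<le> avg H (\<lambda>t. avg H (\<lambda>u. \<Sum>m\<in>G. F m * F (m - b t + b u)))" .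
  have "avg G (\<lambda>n. (avg H (\<lambda>t. F (n + b t)))\<^sup>2) \<le> avg H (\<lambda>t. avg H (\<lambda>u. \<Sum>m\<in>G. F m * F (m - b t + b u))) / real (card G)"
    unfolding avg_def[of G] by (rule divide_right_mono[OF *]) simp
  also have "\<dots> = avg H (\<lambda>t. avg H (\<lambda>u. avg G (\<lambda>m. F m * F (m + b u - b t))))"
    unfolding avg_def by (simp add: sum_divide_distrib[symmetric] algebra_simps)
  finally show ?thesis .
qed

lemma avg_nonneg: "(\<And>x. x \<in> S \<Longrightarrow> 0 \<le> g x) \<Longrightarrow> 0 \<le> avg S g"
  unfolding avg_def by (intro divide_nonneg_nonneg sum_nonneg) auto

lemma avg_swap3: "avg A (\<lambda>a. avg B (\<lambda>b. avg C (\<lambda>c. g a b c))) = avg C (\<lambda>c. avg A (\<lambda>a. avg B (\<lambda>b. g a b c)))"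
proof -
  have "avg A (\<lambda>a. avg B (\<lambda>b. avg C (\<lambda>c. g a b c))) = avg A (\<lambda>a. avg C (\<lambda>c. avg B (\<lambda>b. g a b c)))"
    by (simp add: avg_swap[of B C])
  also have "\<dots> = avg C (\<lambda>c. avg A (\<lambda>a. avg B (\<lambda>b. g a b c)))"
    by (rule avg_swap)
  finally show ?thesis .
qed

definition Tk :: "(complex \<Rightarrow> real) \<Rightarrow> complex set \<Rightarrow> complex set \<Rightarrow> real \<Rightarrow> nat \<Rightarrow> (complex \<Rightarrow> complex) \<Rightarrow> real" where
  "Tk F G D X k Q = avg G (\<lambda>n. avg D (\<lambda>x. avg (gbox_pow X k) (\<lambda>h. F n * F (n + Q (sigma k x h)))))"

lemma Tk_step:
  fixes F :: "complex \<Rightarrow> real"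
  assumes G: "finite G" and supp: "\<And>z. z \<notin> G \<Longrightarrow> F z = 0"
  shows "(Tk F G D X (Suc k) Q)\<^sup>2 \<le> avg G (\<lambda>n. (F n)\<^sup>2) *
           avg (gbox X) (\<lambda>t. avg (gbox X) (\<lambda>u. Tk F G D X k (\<lambda>z. Q (z + u) - Q (z + t))))"
proof -
  define H where "H = gbox X"
  define P where "P = gbox_pow X k"
  define K where "K n = avg D (\<lambda>x. avg P (\<lambda>h. avg H (\<lambda>t. F (n + Q (sigma k x h + t)))))" for n
  have 1: "Tk F G D X (Suc k) Q = avg G (\<lambda>n. F n * K n)"
    unfolding Tk_def K_def avg_gbox_pow_Suc sigma_Suc_upd H_def P_def by (simp add: avg_cmult)
  have 2: "(avg G (\<lambda>n. F n * K n))\<^sup>2 \<le> avg G (\<lambda>n. (F n)\<^sup>2) * avg G (\<lambda>n. (K n)\<^sup>2)"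
    by (rule avg_CS)
  have "avg G (\<lambda>n. (K n)\<^sup>2) \<le> avg G (\<lambda>n. avg D (\<lambda>x. avg P (\<lambda>h. (avg H (\<lambda>t. F (n + Q (sigma k x h + t))))\<^sup>2)))"
  proof (rule avg_mono)
    fix n
    have "(K n)\<^sup>2 \<le> avg D (\<lambda>x. (avg P (\<lambda>h. avg H (\<lambda>t. F (n + Q (sigma k x h + t)))))\<^sup>2)"
      unfolding K_def by (rule avg_sq)
    also have "\<dots> \<le> avg D (\<lambda>x. avg P (\<lambda>h. (avg H (\<lambda>t. F (n + Q (sigma k x h + t))))\<^sup>2))"
      by (intro avg_mono avg_sq)
    finally show "(K n)\<^sup>2 \<le> avg D (\<lambda>x. avg P (\<lambda>h. (avg H (\<lambda>t. F (n + Q (sigma k x h + t))))\<^sup>2))" .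
  qed
  also have "\<dots> = avg D (\<lambda>x. avg P (\<lambda>h. avg G (\<lambda>n. (avg H (\<lambda>t. F (n + Q (sigma k x h + t))))\<^sup>2)))"
    by (rule avg_swap3[symmetric])
  also have "\<dots> \<le> avg D (\<lambda>x. avg P (\<lambda>h. avg H (\<lambda>t. avg H (\<lambda>u. avg G (\<lambda>m. F m * F (m + Q (sigma k x h + u) - Q (sigma k x h + t)))))))"
    unfolding H_def by (intro avg_mono key_shift[OF G finite_gbox supp])
  also have "\<dots> = avg H (\<lambda>t. avg D (\<lambda>x. avg P (\<lambda>h. avg H (\<lambda>u. avg G (\<lambda>m. F m * F (m + Q (sigma k x h + u) - Q (sigma k x h + t)))))))"
    by (rule avg_swap3)
  also have "\<dots> = avg H (\<lambda>t. avg H (\<lambda>u. avg D (\<lambda>x. avg P (\<lambda>h. avg G (\<lambda>m. F m * F (m + Q (sigma k x h + u) - Q (sigma k x h + t)))))))"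
    by (simp add: avg_swap3[of D P H])
  also have "\<dots> = avg H (\<lambda>t. avg H (\<lambda>u. avg G (\<lambda>m. avg D (\<lambda>x. avg P (\<lambda>h. F m * F (m + Q (sigma k x h + u) - Q (sigma k x h + t)))))))"
    by (simp add: avg_swap3[of D P G])
  also have "\<dots> = avg H (\<lambda>t. avg H (\<lambda>u. Tk F G D X k (\<lambda>z. Q (z + u) - Q (z + t))))"
    unfolding Tk_def P_def by (simp add: add_diff_eq)
  finally have 3: "avg G (\<lambda>n. (K n)\<^sup>2) \<le> avg H (\<lambda>t. avg H (\<lambda>u. Tk F G D X k (\<lambda>z. Q (z + u) - Q (z + t))))" .
  have 4: "0 \<le> avg G (\<lambda>n. (F n)\<^sup>2)" by (rule avg_nonneg) simp
  show ?thesis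
    using 1 2 mult_left_mono[OF 3 4] unfolding H_def by simp
qed

lemma avg_abs_le1: "(\<And>x. x \<in> S \<Longrightarrow> \<bar>g x\<bar> \<le> 1) \<Longrightarrow> \<bar>avg S g\<bar> \<le> 1"
proof -
  assume a: "\<And>x. x \<in> S \<Longrightarrow> \<bar>g x\<bar> \<le> 1"
  have "\<bar>avg S g\<bar> \<le> avg S (\<lambda>x. \<bar>g x\<bar>)" by (rule avg_abs)
  also have "\<dots> \<le> avg S (\<lambda>x. 1)" using a by (rule avg_mono)
  also have "\<dots> \<le> 1" unfolding avg_def
    by (cases "finite S") (auto simp: divide_le_eq_1)
  finally show ?thesis .
qed

lemma Tk_le1:
  assumes "\<And>z. \<bar>F z\<bar> \<le> 1"
  shows "\<bar>Tk F G D X k Q\<bar> \<le> 1"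
  unfolding Tk_def
  by (intro avg_abs_le1) (auto simp: abs_mult intro: mult_le_one assms)

lemma select_pair:
  fixes \<Phi> :: "'a \<Rightarrow> 'a \<Rightarrow> real"
  assumes H: "finite H" and bd: "\<And>t u. \<bar>\<Phi> t u\<bar> \<le> 1"
    and big: "avg H (\<lambda>t. avg H (\<lambda>u. \<Phi> t u)) \<ge> 4 * c" and c: "c > 0"
    and L: "1 / real (card H) \<le> 3 * c"
  shows "\<exists>t\<in>H. \<exists>u\<in>H. t \<noteq> u \<and> \<bar>\<Phi> t u\<bar> \<ge> c"
proof (rule ccontr)
  assume "\<not> ?thesis"
  then have sm: "\<And>t u. t \<in> H \<Longrightarrow> u \<in> H \<Longrightarrow> t \<noteq> u \<Longrightarrow> \<bar>\<Phi> t u\<bar> \<le> c" by force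
  have ne: "H \<noteq> {}"
  proof
    assume "H = {}" then show False using big c unfolding avg_def by simp
  qed
  define L where "L = real (card H)"
  have Lpos: "L > 0" unfolding L_def using H ne by (simp add: card_gt_0_iff)
  have row: "(\<Sum>u\<in>H. \<Phi> t u) \<le> 1 + (L - 1) * c" if t: "t \<in> H" for t
  proof -
    have "(\<Sum>u\<in>H. \<Phi> t u) = \<Phi> t t + (\<Sum>u\<in>H - {t}. \<Phi> t u)"
      using H t by (simp add: sum.remove)
    also have "\<dots> \<le> 1 + (\<Sum>u\<in>H - {t}. c)"
    proof (rule add_mono)
      show "\<Phi> t t \<le> 1" using bd[of t t] by simp
      show "(\<Sum>u\<in>H - {t}. \<Phi> t u) \<le> (\<Sum>u\<in>H - {t}. c)"
        by (rule sum_mono) (use sm t in force)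
    qed
    also have "\<dots> = 1 + (L - 1) * c"
    proof -
      have "card H \<ge> 1" using H t by (metis One_nat_def Suc_leI card_gt_0_iff empty_iff)
      then show ?thesis using H t unfolding L_def by (simp add: card_Diff_singleton of_nat_diff)
    qed
    finally show ?thesis .
  qed
  have "(\<Sum>t\<in>H. \<Sum>u\<in>H. \<Phi> t u) \<le> (\<Sum>t\<in>H. 1 + (L - 1) * c)"
    by (rule sum_mono) (rule row)
  also have "\<dots> = L * (1 + (L - 1) * c)" unfolding L_def by simp
  finally have s: "(\<Sum>t\<in>H. \<Sum>u\<in>H. \<Phi> t u) \<le> L * (1 + (L - 1) * c)" .
  have "avg H (\<lambda>t. avg H (\<lambda>u. \<Phi> t u)) = (\<Sum>t\<in>H. \<Sum>u\<in>H. \<Phi> t u) / L^2"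
    unfolding avg_def L_def by (simp add: sum_divide_distrib[symmetric] power2_eq_square)
  also have "\<dots> \<le> L * (1 + (L - 1) * c) / L^2"
    by (rule divide_right_mono[OF s]) simp
  also have "\<dots> = 1 / L + c - c / L" using Lpos by (simp add: field_simps power2_eq_square)
  also have "\<dots> < 4 * c"
  proof -
    have "c / L > 0" using c Lpos by simp
    then show ?thesis using L unfolding L_def[symmetric] by linarith
  qed
  finally show False using big by simp
qed

lemma Tk_select:
  fixes F :: "complex \<Rightarrow> real"
  assumes G: "finite G" and supp: "\<And>z. z \<notin> G \<Longrightarrow> F z = 0"
    and F1: "\<And>z. \<bar>F z\<bar> \<le> 1" and F2: "avg G (\<lambda>n. (F n)\<^sup>2) \<le> \<delta>" and \<delta>: "\<delta> > 0"
    and \<epsilon>: "\<epsilon> > 0" and S: "\<bar>Tk F G D X (Suc k) Q\<bar> \<ge> \<epsilon>"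
    and L: "1 / real (card (gbox X)) \<le> 3 * (\<epsilon>\<^sup>2 / (4 * \<delta>))"
  shows "\<exists>t\<in>gbox X. \<exists>u\<in>gbox X. t \<noteq> u \<and>
           \<bar>Tk F G D X k (\<lambda>z. Q (z + u) - Q (z + t))\<bar> \<ge> \<epsilon>\<^sup>2 / (4 * \<delta>)"
proof -
  define R where "R = avg (gbox X) (\<lambda>t. avg (gbox X) (\<lambda>u. Tk F G D X k (\<lambda>z. Q (z + u) - Q (z + t))))"
  have step: "(Tk F G D X (Suc k) Q)\<^sup>2 \<le> avg G (\<lambda>n. (F n)\<^sup>2) * R"
    unfolding R_def by (rule Tk_step[OF G supp])
  have e2: "\<epsilon>\<^sup>2 \<le> (Tk F G D X (Suc k) Q)\<^sup>2"
    using S \<epsilon> by (metis abs_le_square_iff abs_of_pos less_imp_le)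
  have F2n: "0 \<le> avg G (\<lambda>n. (F n)\<^sup>2)" by (rule avg_nonneg) simp
  have R: "R \<ge> \<epsilon>\<^sup>2 / \<delta>"
  proof (cases "R \<le> 0")
    case True
    then have "avg G (\<lambda>n. (F n)\<^sup>2) * R \<le> 0" using F2n by (simp add: mult_nonneg_nonpos)
    then show ?thesis using step e2 \<epsilon> by (smt (verit) zero_less_power)
  next
    case False
    then have "avg G (\<lambda>n. (F n)\<^sup>2) * R \<le> \<delta> * R" using F2 by (simp add: mult_right_mono)
    then have "\<epsilon>\<^sup>2 \<le> \<delta> * R" using step e2 by simp
    then show ?thesis using \<delta> by (simp add: divide_le_eq mult.commute)
  qed
  have c: "\<epsilon>\<^sup>2 / (4 * \<delta>) > 0" using \<epsilon> \<delta> by simp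
  have "\<exists>t\<in>gbox X. \<exists>u\<in>gbox X. t \<noteq> u \<and> \<bar>(\<lambda>t u. Tk F G D X k (\<lambda>z. Q (z + u) - Q (z + t))) t u\<bar> \<ge> \<epsilon>\<^sup>2 / (4 * \<delta>)"
  proof (rule select_pair[OF finite_gbox _ _ c L])
    show "\<And>t u. \<bar>Tk F G D X k (\<lambda>z. Q (z + u) - Q (z + t))\<bar> \<le> 1" by (rule Tk_le1[OF F1])
    show "4 * (\<epsilon>\<^sup>2 / (4 * \<delta>)) \<le> avg (gbox X) (\<lambda>t. avg (gbox X) (\<lambda>u. Tk F G D X k (\<lambda>z. Q (z + u) - Q (z + t))))"
      using R unfolding R_def by simp
  qed
  then show ?thesis by simp
qed

definition pf :: "(nat \<Rightarrow> complex) \<Rightarrow> nat \<Rightarrow> complex \<Rightarrow> complex" where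
  "pf c e z = (\<Sum>i\<le>e. c i * z ^ i)"

definition shc :: "(nat \<Rightarrow> complex) \<Rightarrow> nat \<Rightarrow> complex \<Rightarrow> nat \<Rightarrow> complex" where
  "shc c e u l = (\<Sum>i\<in>{l..e}. c i * of_nat (i choose l) * u ^ (i - l))"

lemma sum_le_ext: "(i::nat) \<le> e \<Longrightarrow> (\<Sum>l\<le>i. g l) = (\<Sum>l\<le>e. if l \<le> i then g l else 0)"
proof -
  assume "i \<le> e"
  then have "{l\<in>{..e}. l \<le> i} = {..i}" by auto
  then show ?thesis by (simp add: sum.inter_filter[symmetric])
qed

lemma sum_ivl_ext: "(\<Sum>i\<in>{l..e::nat}. g i) = (\<Sum>i\<le>e. if l \<le> i then g i else 0)"
proof -
  have "{i\<in>{..e}. l \<le> i} = {l..e}" by auto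
  then show ?thesis by (simp add: sum.inter_filter[symmetric])
qed

lemma if_zero_mult: "(if P then a else 0) * (b::complex) = (if P then a * b else 0)"
  by simp

lemma pf_shift: "pf c e (z + u) = pf (shc c e u) e z"
proof -
  have "pf c e (z + u) = (\<Sum>i\<le>e. \<Sum>l\<le>i. c i * of_nat (i choose l) * u ^ (i - l) * z ^ l)"
    unfolding pf_def by (simp add: binomial_ring[of z u] sum_distrib_left mult_ac)
  also have "\<dots> = (\<Sum>i\<le>e. \<Sum>l\<le>e. if l \<le> i then c i * of_nat (i choose l) * u ^ (i - l) * z ^ l else 0)"
    by (intro sum.cong refl sum_le_ext) simp
  also have "\<dots> = (\<Sum>l\<le>e. \<Sum>i\<le>e. if l \<le> i then c i * of_nat (i choose l) * u ^ (i - l) * z ^ l else 0)"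
    by (rule sum.swap)
  also have "\<dots> = (\<Sum>l\<le>e. (\<Sum>i\<in>{l..e}. c i * of_nat (i choose l) * u ^ (i - l)) * z ^ l)"
    by (intro sum.cong refl) (simp add: sum_ivl_ext sum_distrib_right if_zero_mult)
  finally show ?thesis unfolding pf_def shc_def .
qed

lemma shc_top: "shc c e u e = c e"
  unfolding shc_def by simp

lemma shc_sub1: "shc c (Suc e) u e = c e + c (Suc e) * of_nat (Suc e) * u"
proof -
  have "{e..Suc e} = {e, Suc e}" by auto
  then show ?thesis unfolding shc_def by simp
qed

lemma pf_Suc: "pf c (Suc e) z = pf c e z + c (Suc e) * z ^ Suc e"
  unfolding pf_def by simp

definition dcf :: "(nat \<Rightarrow> complex) \<Rightarrow> nat \<Rightarrow> complex \<Rightarrow> complex \<Rightarrow> nat \<Rightarrow> complex" where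
  "dcf c e t u l = shc c e u l - shc c e t l"

lemma pf_diff: "pf c (Suc e) (z + u) - pf c (Suc e) (z + t) = pf (dcf c (Suc e) t u) e z"
proof -
  have "pf c (Suc e) (z + u) - pf c (Suc e) (z + t) = pf (dcf c (Suc e) t u) (Suc e) z"
    unfolding pf_shift by (simp add: pf_def dcf_def sum_subtractf left_diff_distrib)
  also have "\<dots> = pf (dcf c (Suc e) t u) e z"
    by (simp add: pf_Suc dcf_def shc_top)
  finally show ?thesis .
qed

lemma dcf_lead: "dcf c (Suc e) t u e = c (Suc e) * of_nat (Suc e) * (u - t)"
  unfolding dcf_def shc_sub1 by (simp add: algebra_simps)

lemma gauss_add: "a \<in> gauss_ints \<Longrightarrow> b \<in> gauss_ints \<Longrightarrow> a + b \<in> gauss_ints"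
  unfolding gauss_ints_def by auto
lemma gauss_diff: "a \<in> gauss_ints \<Longrightarrow> b \<in> gauss_ints \<Longrightarrow> a - b \<in> gauss_ints"
  unfolding gauss_ints_def by auto
lemma gauss_mult: "a \<in> gauss_ints \<Longrightarrow> b \<in> gauss_ints \<Longrightarrow> a * b \<in> gauss_ints"
  unfolding gauss_ints_def by auto
lemma gauss_of_nat: "of_nat n \<in> gauss_ints"
  unfolding gauss_ints_def by auto
lemma gauss_one: "1 \<in> gauss_ints"
  unfolding gauss_ints_def by auto
lemma gauss_zero: "0 \<in> gauss_ints"
  unfolding gauss_ints_def by auto
lemma gauss_pow: "a \<in> gauss_ints \<Longrightarrow> a ^ n \<in> gauss_ints"
  by (induction n) (auto intro: gauss_mult gauss_one)
lemma gauss_sum: "(\<And>i. i \<in> I \<Longrightarrow> f i \<in> gauss_ints) \<Longrightarrow> sum f I \<in> gauss_ints"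
  by (induction I rule: infinite_finite_induct) (auto intro: gauss_add gauss_zero)

lemma shc_gauss: "(\<And>i. i \<le> e \<Longrightarrow> c i \<in> gauss_ints) \<Longrightarrow> u \<in> gauss_ints \<Longrightarrow> shc c e u l \<in> gauss_ints"
  unfolding shc_def by (intro gauss_sum gauss_mult gauss_of_nat gauss_pow) auto

lemma dcf_gauss: "(\<And>i. i \<le> e \<Longrightarrow> c i \<in> gauss_ints) \<Longrightarrow> u \<in> gauss_ints \<Longrightarrow> t \<in> gauss_ints \<Longrightarrow> dcf c e t u l \<in> gauss_ints"
  unfolding dcf_def by (intro gauss_diff shc_gauss) auto

lemma shc_bound:
  assumes c: "\<And>i. i \<le> e \<Longrightarrow> cmod (c i) \<le> B" and u: "cmod u \<le> 2 * X" and X: "X \<ge> 1"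
  shows "cmod (shc c e u l) \<le> B * 8 ^ e * X ^ e"
proof -
  have B: "B \<ge> 0" using c[of 0] by (meson norm_ge_zero order_trans le0)
  have trm: "cmod (c i * of_nat (i choose l) * u ^ (i - l)) \<le> B * 2 ^ e * (2 * X) ^ e" if i: "i \<in> {l..e}" for i
  proof -
    have "cmod (c i * of_nat (i choose l) * u ^ (i - l)) = cmod (c i) * real (i choose l) * cmod u ^ (i - l)"
      by (simp add: norm_mult norm_power)
    also have "\<dots> \<le> B * 2 ^ e * (2 * X) ^ e"
    proof (intro mult_mono)
      show "cmod (c i) \<le> B" using c i by auto
      have "i choose l \<le> 2 ^ i" by (rule binomial_le_pow2)
      also have "(2::nat) ^ i \<le> 2 ^ e" using i by (intro power_increasing) auto
      finally show "real (i choose l) \<le> 2 ^ e" by (metis of_nat_le_iff of_nat_numeral of_nat_power)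
      have "cmod u ^ (i - l) \<le> (2 * X) ^ (i - l)" using u by (intro power_mono) auto
      also have "\<dots> \<le> (2 * X) ^ e" using X i by (intro power_increasing) auto
      finally show "cmod u ^ (i - l) \<le> (2 * X) ^ e" .
    qed (use B in auto)
    finally show ?thesis .
  qed
  have "cmod (shc c e u l) \<le> (\<Sum>i\<in>{l..e}. cmod (c i * of_nat (i choose l) * u ^ (i - l)))"
    unfolding shc_def by (rule norm_sum)
  also have "\<dots> \<le> (\<Sum>i\<in>{l..e}. B * 2 ^ e * (2 * X) ^ e)"
    by (rule sum_mono) (rule trm)
  also have "\<dots> = real (card {l..e}) * (B * 2 ^ e * (2 * X) ^ e)" by simp
  also have "\<dots> \<le> 2 ^ e * (B * 2 ^ e * (2 * X) ^ e)"
  proof (rule mult_right_mono)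
    have "card {l..e} \<le> Suc e" by simp
    also have "Suc e \<le> 2 ^ e" using less_exp[of e] by (rule Suc_leI)
    finally show "real (card {l..e}) \<le> 2 ^ e" by (metis of_nat_le_iff of_nat_numeral of_nat_power)
    show "0 \<le> B * 2 ^ e * (2 * X) ^ e" using B X by simp
  qed
  also have "\<dots> = B * 8 ^ e * X ^ e"
  proof -
    have e8: "(8::real)^e = 2^e*2^e*2^e" by (simp flip: power_mult_distrib)
    show ?thesis unfolding e8 power_mult_distrib by (simp add: mult_ac)
  qed
  finally show ?thesis .
qed

lemma dcf_bound:
  assumes c: "\<And>i. i \<le> e \<Longrightarrow> cmod (c i) \<le> B" and u: "cmod u \<le> 2 * X" and t: "cmod t \<le> 2 * X" and X: "X \<ge> 1"
  shows "cmod (dcf c e t u l) \<le> 2 * 8 ^ e * X ^ e * B"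
proof -
  have "cmod (dcf c e t u l) \<le> cmod (shc c e u l) + cmod (shc c e t l)"
    unfolding dcf_def by (rule norm_triangle_ineq4)
  also have "\<dots> \<le> B * 8 ^ e * X ^ e + B * 8 ^ e * X ^ e"
    by (intro add_mono shc_bound[OF c] u t X) auto
  finally show ?thesis by (simp add: algebra_simps)
qed

definition epsj :: "real \<Rightarrow> nat \<Rightarrow> real" where
  "epsj \<delta> j = \<delta> ^ (2 ^ j + 1) / 2 ^ (3 * 2 ^ j - 2)"

lemma epsj_pos: "\<delta> > 0 \<Longrightarrow> epsj \<delta> j > 0"
  unfolding epsj_def by simp

lemma epsj_rel: assumes "\<delta> > 0" shows "(epsj \<delta> j)\<^sup>2 / (4 * \<delta>) = epsj \<delta> (Suc j)"
proof -
  define a :: nat where "a = 2 ^ j"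
  have a: "a \<ge> 1" unfolding a_def by simp
  have e1: "2 ^ Suc j + 1 = (2 * a + 2) - 1" unfolding a_def by simp
  have e2: "3 * 2 ^ Suc j - 2 = 2 * (3 * a - 2) + 2"
  proof -
    have "3 * 2 ^ Suc j = 2 * (3 * a)" unfolding a_def by simp
    then show ?thesis using a by linarith
  qed
  have d: "\<delta> ^ (2 * a + 2 - 1) = \<delta> ^ (2 * a + 2) / \<delta>"
    using assms by (simp add: power_diff)
  have f4: "(4::real)^m = 2^m*2^m" for m by (simp flip: power_mult_distrib)
  show ?thesis
    unfolding epsj_def e1 e2 d a_def[symmetric]
    by (simp add: power2_eq_square power_add power_mult field_simps f4)
qed

lemma main_ind:
  fixes F :: "complex \<Rightarrow> real"
  assumes G: "finite G" and supp: "\<And>z. z \<notin> G \<Longrightarrow> F z = 0"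
    and F1: "\<And>z. \<bar>F z\<bar> \<le> 1" and F2: "avg G (\<lambda>n. (F n)\<^sup>2) \<le> \<delta>" and \<delta>: "\<delta> > 0"
    and X: "X \<ge> 1"
    and Lc: "\<And>j. j \<le> J \<Longrightarrow> 1 / real (card (gbox X)) \<le> 3 * epsj \<delta> j"
  shows "j + k \<le> J \<Longrightarrow> (\<forall>i\<le>Suc k. c i \<in> gauss_ints) \<Longrightarrow> c (Suc k) \<noteq> 0 \<Longrightarrow>
    (\<forall>i\<le>Suc k. cmod (c i) \<le> B) \<Longrightarrow> \<bar>Tk F G D X k (pf c (Suc k))\<bar> \<ge> epsj \<delta> j \<Longrightarrow>
    \<exists>\<alpha> \<beta>. \<alpha> \<in> gauss_ints \<and> \<beta> \<in> gauss_ints \<and> \<alpha> \<noteq> 0 \<and>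
      cmod \<alpha> \<le> B * (\<Prod>e\<in>{2..Suc k}. 2 * 8 ^ e * X ^ e) \<and>
      cmod \<beta> \<le> B * (\<Prod>e\<in>{2..Suc k}. 2 * 8 ^ e * X ^ e) \<and>
      \<bar>Tk F G D X 0 (\<lambda>z. \<alpha> * z + \<beta>)\<bar> \<ge> epsj \<delta> (j + k)"
proof (induction k arbitrary: j c B)
  case 0
  have pf1: "pf c (Suc 0) = (\<lambda>z. c 1 * z + c 0)"
    unfolding pf_def by (auto simp: add.commute)
  show ?case
    by (rule exI[of _ "c 1"], rule exI[of _ "c 0"]) (use 0 pf1 in auto)
next
  case (Suc k)
  define Q where "Q = pf c (Suc (Suc k))"
  have epos: "epsj \<delta> j > 0" by (rule epsj_pos[OF \<delta>])
  have L: "1 / real (card (gbox X)) \<le> 3 * ((epsj \<delta> j)\<^sup>2 / (4 * \<delta>))"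
    unfolding epsj_rel[OF \<delta>] using Lc Suc.prems(1) by simp
  obtain t u where tu: "t \<in> gbox X" "u \<in> gbox X" "t \<noteq> u"
    and big: "\<bar>Tk F G D X k (\<lambda>z. Q (z + u) - Q (z + t))\<bar> \<ge> (epsj \<delta> j)\<^sup>2 / (4 * \<delta>)"
    using Tk_select[OF G supp F1 F2 \<delta> epos _ L, of D k Q] Suc.prems(5) unfolding Q_def by auto
  define c' where "c' = dcf c (Suc (Suc k)) t u"
  define B' where "B' = 2 * 8 ^ Suc (Suc k) * X ^ Suc (Suc k) * B"
  have Qe: "(\<lambda>z. Q (z + u) - Q (z + t)) = pf c' (Suc k)"
    unfolding Q_def c'_def by (rule ext) (rule pf_diff)
  have IH: "\<exists>\<alpha> \<beta>. \<alpha> \<in> gauss_ints \<and> \<beta> \<in> gauss_ints \<and> \<alpha> \<noteq> 0 \<and>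
      cmod \<alpha> \<le> B' * (\<Prod>e\<in>{2..Suc k}. 2 * 8 ^ e * X ^ e) \<and>
      cmod \<beta> \<le> B' * (\<Prod>e\<in>{2..Suc k}. 2 * 8 ^ e * X ^ e) \<and>
      \<bar>Tk F G D X 0 (\<lambda>z. \<alpha> * z + \<beta>)\<bar> \<ge> epsj \<delta> (Suc j + k)"
  proof (rule Suc.IH)
    show "Suc j + k \<le> J" using Suc.prems(1) by simp
    show "\<forall>i\<le>Suc k. c' i \<in> gauss_ints"
      unfolding c'_def using Suc.prems(2) tu by (auto intro!: dcf_gauss intro: gbox_gauss)
    show "c' (Suc k) \<noteq> 0"
      unfolding c'_def dcf_lead using Suc.prems(3) tu by (simp del: of_nat_Suc)
    show "\<forall>i\<le>Suc k. cmod (c' i) \<le> B'"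
    proof (intro allI impI)
      fix i assume "i \<le> Suc k"
      show "cmod (c' i) \<le> B'"
        unfolding c'_def B'_def
        by (rule dcf_bound) (use Suc.prems(4) tu X gbox_norm in auto)
    qed
    show "epsj \<delta> (Suc j) \<le> \<bar>Tk F G D X k (pf c' (Suc k))\<bar>"
      using big unfolding Qe epsj_rel[OF \<delta>] .
  qed
  have prod: "B' * (\<Prod>e\<in>{2..Suc k}. 2 * 8 ^ e * X ^ e) = B * (\<Prod>e\<in>{2..Suc (Suc k)}. 2 * 8 ^ e * X ^ e)"
    unfolding B'_def by (simp add: prod.cl_ivl_Suc mult_ac)
  show ?case using IH unfolding prod by simp
qed

lemma bal_supp: "A \<subseteq> gbox (real N) \<Longrightarrow> z \<notin> gbox (real N) \<Longrightarrow> balanced A N z = 0"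
  unfolding balanced_def by (auto simp: indicator_def)

lemma card_gbox_N: "card (gbox (real N)) = N^2"
  by (simp add: card_gbox)

lemma dens_le1: assumes "A \<subseteq> gbox (real N)" "N \<ge> 1" shows "density A N \<le> 1"
proof -
  have "card A \<le> card (gbox (real N))" using assms by (intro card_mono) auto
  then have "real (card A) \<le> (real N)^2" unfolding card_gbox_N by (metis of_nat_le_iff of_nat_power)
  then show ?thesis unfolding density_def using assms by (simp add: divide_le_eq_1)
qed

lemma dens_nonneg: "density A N \<ge> 0"
  unfolding density_def by simp

lemma bal_le1: assumes "A \<subseteq> gbox (real N)" "0 \<le> density A N" "density A N \<le> 1"
  shows "\<bar>balanced A N z\<bar> \<le> 1"
  using assms unfolding balanced_def by (auto simp: indicator_def)

lemma bal_sq: assumes A: "A \<subseteq> gbox (real N)" and N: "N \<ge> 1"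
  shows "avg (gbox (real N)) (\<lambda>n. (balanced A N n)\<^sup>2) \<le> density A N"
proof -
  define \<delta> where "\<delta> = density A N"
  define G where "G = gbox (real N)"
  have pt: "(balanced A N n)\<^sup>2 = indicator A n * (1 - 2 * \<delta>) + \<delta>\<^sup>2" if "n \<in> G" for n
    using that A unfolding balanced_def \<delta>_def G_def
    by (auto simp: indicator_def power2_eq_square algebra_simps)
  have "(\<Sum>n\<in>G. (balanced A N n)\<^sup>2) = (\<Sum>n\<in>G. indicator A n * (1 - 2 * \<delta>) + \<delta>\<^sup>2)"
    by (rule sum.cong) (auto simp: pt)
  also have "\<dots> = real (card A) * (1 - 2 * \<delta>) + real (card G) * \<delta>\<^sup>2"
  proof -
    have "(\<Sum>n\<in>G. indicator A n :: real) = real (card (G \<inter> A))"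
    proof -
      have "real (card (G \<inter> A)) = (\<Sum>n\<in>G \<inter> A. 1)" by simp
      also have "\<dots> = (\<Sum>n\<in>G. if n \<in> A then 1 else 0)"
        by (rule sum.inter_restrict) (simp add: G_def)
      finally show ?thesis by (simp add: indicator_def of_bool_def)
    qed
    moreover have "G \<inter> A = A" using A unfolding G_def by auto
    ultimately show ?thesis by (simp add: sum.distrib sum_distrib_right[symmetric])
  qed
  also have "\<dots> = (real N)^2 * (\<delta> - \<delta>\<^sup>2)"
  proof -
    have "real (card A) = \<delta> * (real N)^2" unfolding \<delta>_def density_def using N by simp
    then show ?thesis unfolding G_def card_gbox_N by (simp add: algebra_simps power2_eq_square)
  qed
  finally have s: "(\<Sum>n\<in>G. (balanced A N n)\<^sup>2) = (real N)^2 * (\<delta> - \<delta>\<^sup>2)" .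
  have "avg G (\<lambda>n. (balanced A N n)\<^sup>2) = \<delta> - \<delta>\<^sup>2"
    unfolding avg_def s using N by (simp add: G_def card_gbox_N)
  also have "\<dots> \<le> \<delta>" by simp
  finally show ?thesis unfolding G_def \<delta>_def .
qed

lemma prod_bound:
  fixes X :: real
  assumes X: "X \<ge> 1" and m: "m \<ge> 1"
  shows "(\<Prod>e\<in>{2..m}. 2 * 8 ^ e * X ^ e) \<le> 2 ^ (m * (2 * m + 1)) * X ^ (m\<^sup>2)"
  using m
proof (induction m rule: nat_induct_at_least)
  case base
  then show ?case using X by simp
next
  case (Suc m)
  have "(\<Prod>e\<in>{2..Suc m}. 2 * 8 ^ e * X ^ e) = (\<Prod>e\<in>{2..m}. 2 * 8 ^ e * X ^ e) * (2 * 8 ^ Suc m * X ^ Suc m)"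
    using Suc.hyps by (simp add: prod.cl_ivl_Suc)
  also have "\<dots> \<le> (2 ^ (m * (2 * m + 1)) * X ^ (m\<^sup>2)) * (2 * 8 ^ Suc m * X ^ Suc m)"
    by (rule mult_right_mono[OF Suc.IH]) (use X in simp)
  also have "\<dots> = 2 ^ (m * (2 * m + 1) + 1 + 3 * Suc m) * X ^ (m\<^sup>2 + Suc m)"
  proof -
    have f: "(8::real) ^ m = 2 ^ (3 * m)" by (simp add: power_mult)
    have f2: "(2::real)^m * 2^(3*m) = 2^(4*m)" by (simp flip: power_add)
    show ?thesis by (simp add: power_add f f2)
  qed
  also have "\<dots> \<le> 2 ^ (Suc m * (2 * Suc m + 1)) * X ^ ((Suc m)\<^sup>2)"
  proof (rule mult_mono)
    show "(2::real) ^ (m * (2 * m + 1) + 1 + 3 * Suc m) \<le> 2 ^ (Suc m * (2 * Suc m + 1))"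
      by (rule power_increasing) (use Suc.hyps in \<open>auto simp: algebra_simps\<close>)
    show "X ^ (m\<^sup>2 + Suc m) \<le> X ^ ((Suc m)\<^sup>2)"
      by (rule power_increasing) (use X in \<open>auto simp: power2_eq_square\<close>)
  qed (use X in auto)
  finally show ?case .
qed

lemma avg_singleton: "avg {a} g = g a"
  unfolding avg_def by simp

lemma Tk_0: "Tk F G D X 0 Q = avg G (\<lambda>n. avg D (\<lambda>x. F n * F (n + Q x)))"
  unfolding Tk_def gbox_pow_0 avg_singleton sigma_def by simp

theorem mainTheorem6:
  fixes d r N N1 :: nat and \<delta>0 :: real and p :: "complex poly"
    and A D :: "complex set"
  assumes d: "d \<ge> 1" and r: "r \<ge> 4"
    and \<delta>0: "0 < \<delta>0" "\<delta>0 < 1"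
    and p_coeffs: "\<forall>i. coeff p i \<in> gauss_ints" and p_deg: "degree p = d"
    and N1: "N1 \<ge> 1" and NN1: "N \<ge> N1"
    and A: "A \<subseteq> gbox (real N)" and dens: "density A N \<ge> \<delta>0"
    and D: "D \<noteq> {}" "D \<subseteq> gbox (2 * real N powr (1 / (2 * real d)))"
    and hyp: "\<bar>avg (gbox (real N)) (\<lambda>n. avg D (\<lambda>x.
                 avg (gbox_pow (real N powr (1 / (8 * real d ^ r))) (d - 1)) (\<lambda>h.
                   balanced A N n * balanced A N (n + poly p (sigma (d - 1) x h)))))\<bar>
              \<ge> density A N ^ 2 / 2"
    and NN0: "real N \<ge> Max {real N1,
                 ((2::real) ^ (3 * 2 ^ (d - 1) - 1) / \<delta>0 ^ (2 ^ (d - 1) + 1)) ^ (4 * d ^ r),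
                 ((2::real) ^ (3 * 2 ^ (d - 1)) * real (2 * d + 2) ^ (2 * d + 2)
                    * 2 ^ (2 * d * (d + 1)) * Mp p ^ 2 / \<delta>0 ^ (2 ^ (d - 1) + 1)) ^ 4}"
  shows "\<exists>\<alpha> \<beta>. \<alpha> \<in> gauss_ints \<and> \<beta> \<in> gauss_ints \<and> \<alpha> \<noteq> 0 \<and>
           max (cmod \<alpha>) (cmod \<beta>) \<le> 2 ^ (d * (2 * d + 1)) * Mp p * real N powr (1 / (8 * real d ^ (r - 2))) \<and>
           \<bar>avg (gbox (real N)) (\<lambda>n. avg D (\<lambda>x.
               balanced A N n * balanced A N (n + \<alpha> * x + \<beta>)))\<bar>
             \<ge> density A N ^ (2 ^ (d - 1) + 1) / 2 ^ (3 * 2 ^ (d - 1) - 2)"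
proof -
  define \<delta> where "\<delta> = density A N"
  define X where "X = real N powr (1 / (8 * real d ^ r))"
  define F where "F = balanced A N"
  define G where "G = gbox (real N)"
  define E where "E = 2 ^ (d - 1) + (1::nat)"
  define K where "K = 3 * 2 ^ (d - 1) - (1::nat)"
  define Y where "Y = (2::real) ^ K / \<delta>0 ^ E"
  have Npos: "N \<ge> 1" using N1 NN1 by simp
  have \<delta>pos: "\<delta> > 0" using dens \<delta>0 unfolding \<delta>_def by simp
  have \<delta>1: "\<delta> \<le> 1" unfolding \<delta>_def by (rule dens_le1[OF A Npos])
  have \<delta>\<delta>0: "\<delta>0 \<le> \<delta>" using dens unfolding \<delta>_def .
  have K2: "K \<ge> 2"
  proof -
    have "(2::nat) ^ (d - 1) \<ge> 1" by simp
    then show ?thesis unfolding K_def by linarith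
  qed
  have dE: "\<delta>0 ^ E > 0" "\<delta>0 ^ E \<le> 1" using \<delta>0 by (auto simp: power_le_one)
  have Y4: "Y \<ge> 4"
  proof -
    have "(4::real) = 2 ^ 2" by simp
    also have "\<dots> \<le> 2 ^ K" by (rule power_increasing[OF K2]) simp
    also have "\<dots> \<le> 2 ^ K / \<delta>0 ^ E" using dE by (simp add: le_divide_eq)
    finally show ?thesis unfolding Y_def .
  qed
  have NY: "Y ^ (4 * d ^ r) \<le> real N"
  proof -
    have "Y ^ (4 * d ^ r) \<le> Max {real N1,
                 ((2::real) ^ (3 * 2 ^ (d - 1) - 1) / \<delta>0 ^ (2 ^ (d - 1) + 1)) ^ (4 * d ^ r),
                 ((2::real) ^ (3 * 2 ^ (d - 1)) * real (2 * d + 2) ^ (2 * d + 2)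
                    * 2 ^ (2 * d * (d + 1)) * Mp p ^ 2 / \<delta>0 ^ (2 ^ (d - 1) + 1)) ^ 4}"
      unfolding Y_def K_def E_def by (rule Max_ge) auto
    then show ?thesis using NN0 by linarith
  qed
  have dr: "real d ^ r > 0" using d by simp
  have X0: "X \<ge> 0" unfolding X_def by simp
  have X2: "X\<^sup>2 \<ge> Y"
  proof -
    have "X\<^sup>2 = real N powr (real 2 * (1 / (8 * real d ^ r)))"
      unfolding X_def using Npos by (subst powr_power) auto
    also have "\<dots> = real N powr (1 / real (4 * d ^ r))" by simp
    also have "\<dots> \<ge> (Y ^ (4 * d ^ r)) powr (1 / real (4 * d ^ r))"
      by (rule powr_mono2) (use NY Y4 in auto)
    also have "(Y ^ (4 * d ^ r)) powr (1 / real (4 * d ^ r)) = Y"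
    proof -
      have "(Y ^ (4 * d ^ r)) = Y powr (real (4 * d ^ r))" using powr_realpow[of Y "4 * d ^ r"] Y4 by simp
      then show ?thesis using dr d Y4 by (simp add: powr_powr)
    qed
    finally show ?thesis by simp
  qed
  have X2': "X \<ge> 2"
  proof (rule ccontr)
    assume "\<not> X \<ge> 2"
    then have "X\<^sup>2 < 2\<^sup>2" using X0 by (intro power_strict_mono) auto
    then show False using X2 Y4 by simp
  qed
  have X1: "X \<ge> 1" using X2' by simp
  have cardX: "real (card (gbox X)) \<ge> X\<^sup>2 / 4"
  proof -
    have fl: "real (nat \<lfloor>X\<rfloor>) \<ge> X / 2"
    proof -
      have "real_of_int \<lfloor>X\<rfloor> \<ge> X - 1" by linarith
      moreover have "\<lfloor>X\<rfloor> \<ge> 0" using X0 by simp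
      ultimately show ?thesis using X2' by linarith
    qed
    have "X\<^sup>2 / 4 = (X / 2)\<^sup>2" by (simp add: power2_eq_square)
    also have "\<dots> \<le> (real (nat \<lfloor>X\<rfloor>))\<^sup>2" by (rule power_mono[OF fl]) (use X0 in simp)
    also have "\<dots> = real (card (gbox X))" by (simp add: card_gbox)
    finally show ?thesis .
  qed
  have Lc: "1 / real (card (gbox X)) \<le> 3 * epsj \<delta> j" if j: "j \<le> d - 1" for j
  proof -
    have cpos: "real (card (gbox X)) > 0" using cardX X2' by (smt (verit) zero_less_power divide_pos_pos)
    have "1 / real (card (gbox X)) \<le> 1 / (Y / 4)"
      by (rule divide_left_mono) (use cardX X2 cpos Y4 in auto)
    also have "\<dots> = 4 * \<delta>0 ^ E / 2 ^ K" unfolding Y_def using dE by (simp add: field_simps)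
    also have "\<dots> \<le> 3 * (\<delta>0 ^ E / 2 ^ (3 * 2 ^ (d - 1) - 2))"
    proof -
      have "(2::real) ^ K = 2 * 2 ^ (3 * 2 ^ (d - 1) - 2)"
      proof -
        have "K = Suc (3 * 2 ^ (d - 1) - 2)" using K2 unfolding K_def by linarith
        then show ?thesis by simp
      qed
      then show ?thesis using dE by (simp add: field_simps)
    qed
    also have "\<dots> \<le> 3 * epsj \<delta> j"
    proof -
      have "\<delta>0 ^ E \<le> \<delta> ^ E" by (rule power_mono) (use \<delta>\<delta>0 \<delta>0 in auto)
      also have "\<dots> \<le> \<delta> ^ (2 ^ j + 1)"
      proof (rule power_decreasing)
        have "(2::nat) ^ j \<le> 2 ^ (d - 1)" by (rule power_increasing) (use j in auto)
        then show "2 ^ j + 1 \<le> E" unfolding E_def by simp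
      qed (use \<delta>pos \<delta>1 in auto)
      finally have num: "\<delta>0 ^ E \<le> \<delta> ^ (2 ^ j + 1)" .
      have den: "(2::real) ^ (3 * 2 ^ j - 2) \<le> 2 ^ (3 * 2 ^ (d - 1) - 2)"
      proof (rule power_increasing)
        have "(2::nat) ^ j \<le> 2 ^ (d - 1)" by (rule power_increasing) (use j in auto)
        then show "3 * 2 ^ j - 2 \<le> 3 * 2 ^ (d - 1) - (2::nat)" by linarith
      qed simp
      have "\<delta>0 ^ E / 2 ^ (3 * 2 ^ (d - 1) - 2) \<le> \<delta> ^ (2 ^ j + 1) / 2 ^ (3 * 2 ^ j - 2)"
        by (rule frac_le) (use num den dE in auto)
      then show ?thesis unfolding epsj_def by simp
    qed
    finally show ?thesis .
  qed
  define B where "B = Mp p / 2"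
  have cB: "\<forall>i\<le>Suc (d - 1). cmod (coeff p i) \<le> B"
  proof (intro allI impI)
    fix i assume "i \<le> Suc (d - 1)"
    then have "i \<in> {..degree p}" using p_deg d by auto
    then have "cmod (coeff p i) \<le> Max ((\<lambda>i. cmod (coeff p i)) ` {..degree p})" by (intro Max_ge) auto
    then show "cmod (coeff p i) \<le> B" unfolding B_def Mp_def by simp
  qed
  have B0: "B \<ge> 0" using cB by (meson norm_ge_zero order_trans zero_le)
  have lead: "coeff p (Suc (d - 1)) \<noteq> 0"
  proof -
    have "p \<noteq> 0" using p_deg d by auto
    then show ?thesis using leading_coeff_neq_0[of p] p_deg d by simp
  qed
  have pfp: "pf (coeff p) (Suc (d - 1)) = poly p"
    by (rule ext) (use p_deg d in \<open>simp add: pf_def poly_altdef\<close>)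
  have hypT: "\<bar>Tk F G D X (d - 1) (pf (coeff p) (Suc (d - 1)))\<bar> \<ge> epsj \<delta> 0"
    using hyp unfolding pfp Tk_def F_def G_def X_def epsj_def \<delta>_def by (simp add: power2_eq_square)
  have supp: "\<And>z. z \<notin> G \<Longrightarrow> F z = 0" unfolding F_def G_def using bal_supp[OF A] by blast
  have F1: "\<And>z. \<bar>F z\<bar> \<le> 1" unfolding F_def using bal_le1[OF A dens_nonneg] \<delta>1 unfolding \<delta>_def by blast
  have F2: "avg G (\<lambda>n. (F n)\<^sup>2) \<le> \<delta>" unfolding F_def G_def \<delta>_def by (rule bal_sq[OF A Npos])
  obtain \<alpha> \<beta> where ab: "\<alpha> \<in> gauss_ints" "\<beta> \<in> gauss_ints" "\<alpha> \<noteq> 0"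
      "cmod \<alpha> \<le> B * (\<Prod>e\<in>{2..Suc (d - 1)}. 2 * 8 ^ e * X ^ e)"
      "cmod \<beta> \<le> B * (\<Prod>e\<in>{2..Suc (d - 1)}. 2 * 8 ^ e * X ^ e)"
      "\<bar>Tk F G D X 0 (\<lambda>z. \<alpha> * z + \<beta>)\<bar> \<ge> epsj \<delta> (0 + (d - 1))"
    using main_ind[OF _ supp F1 F2 \<delta>pos X1 Lc, where J="d - 1" and j=0 and k="d - 1" and c="coeff p" and B=B and D=D] hypT lead cB p_coeffs
    unfolding G_def by auto
  have bnd: "B * (\<Prod>e\<in>{2..Suc (d - 1)}. 2 * 8 ^ e * X ^ e) \<le> 2 ^ (d * (2 * d + 1)) * Mp p * real N powr (1 / (8 * real d ^ (r - 2)))"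
  proof -
    have "B * (\<Prod>e\<in>{2..Suc (d - 1)}. 2 * 8 ^ e * X ^ e) \<le> B * (2 ^ (d * (2 * d + 1)) * X ^ (d\<^sup>2))"
      using prod_bound[OF X1 d] d B0 by (intro mult_left_mono) auto
    also have "X ^ (d\<^sup>2) = real N powr (1 / (8 * real d ^ (r - 2)))"
    proof -
      have "X ^ (d\<^sup>2) = real N powr (real (d\<^sup>2) * (1 / (8 * real d ^ r)))"
        unfolding X_def using Npos by (subst powr_power) auto
      also have "real (d\<^sup>2) * (1 / (8 * real d ^ r)) = 1 / (8 * real d ^ (r - 2))"
      proof -
        have "real d ^ r = real d ^ (r - 2) * (real d)\<^sup>2"
        proof -
          have "r = (r - 2) + 2" using r by simp
          then have "real d ^ r = real d ^ ((r - 2) + 2)" by simp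
          then show ?thesis by (simp only: power_add)
        qed
        then show ?thesis using d by (simp add: field_simps)
      qed
      finally show ?thesis .
    qed
    also have "B * (2 ^ (d * (2 * d + 1)) * real N powr (1 / (8 * real d ^ (r - 2)))) \<le> 2 ^ (d * (2 * d + 1)) * Mp p * real N powr (1 / (8 * real d ^ (r - 2)))"
      unfolding B_def using B0 unfolding B_def by (simp add: mult_ac)
    finally show ?thesis .
  qed
  show ?thesis
  proof (intro exI conjI)
    show "\<alpha> \<in> gauss_ints" "\<beta> \<in> gauss_ints" "\<alpha> \<noteq> 0" by (fact ab)+
    show "max (cmod \<alpha>) (cmod \<beta>) \<le> 2 ^ (d * (2 * d + 1)) * Mp p * real N powr (1 / (8 * real d ^ (r - 2)))"
      using ab(4,5) bnd by simp
    show "\<bar>avg (gbox (real N)) (\<lambda>n. avg D (\<lambda>x. balanced A N n * balanced A N (n + \<alpha> * x + \<beta>)))\<bar>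
             \<ge> density A N ^ (2 ^ (d - 1) + 1) / 2 ^ (3 * 2 ^ (d - 1) - 2)"
      using ab(6) unfolding Tk_0 epsj_def F_def G_def \<delta>_def by (simp add: add.assoc)
  qed
qed

end
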